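(* For integers $n$ and $\lceil n/2\rceil\le j\le n$ let $$B_j=\Big(\frac{n!}{(n-j)!}\Big)^2\frac{1}{j!}\Big(1-\frac{j}{n}\Big)^{n\log n},$$ and set $\varphi_2(n)=\sum_{j=\lceil n/2\rceil}^{n}B_j$. Then for $n\ge 9$, $$\varphi_2(n)\le\exp\Big\{1-\tfrac{3}{1000}\,n\log n\Big\}.$$
   Context: $\log$ denotes the natural logarithm. *)

theory Defs
  imports Complex_Main
begin

definition B_term :: "nat \<Rightarrow> nat \<Rightarrow> real" where
  "B_term n j = (fact n / fact (n - j)) ^ 2 * (1 / fact j) *
     (1 - real j / real n) powr (real n * ln (real n))"

definition phi2 :: "nat \<Rightarrow> real" where
  "phi2 n = (\<Sum>j = nat \<lceil>real n / 2\<rceil>..n. B_term n j)"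

end

theory Submission
  imports Defs "HOL-Analysis.Harmonic_Numbers"
begin

lemma ln2_lower: "ln (2::real) > 693/1000"
proof -
  have "ln (2::real) \<in> {307/443..}" using ln_approx_bounds[of 2 3] by (simp add: eval_nat_numeral)
  thus ?thesis by simp
qed

lemma ln_ratio_le: "0 < x \<Longrightarrow> x < (y::real) \<Longrightarrow> ln x \<le> ln y - (y - x) / y"
proof -
  assume h: "0 < x" "x < y"
  have "ln (x / y) \<le> x / y - 1" using h by (intro ln_le_minus_one) simp
  moreover have "ln (x / y) = ln x - ln y" using h by (simp add: ln_div)
  moreover have "x / y - 1 = - ((y - x) / y)" using h by (simp add: field_simps)
  ultimately show ?thesis by linarith
qed

definition A :: "nat \<Rightarrow> real" where
  "A m = (fact (2*m) / fact m)^2 / fact m"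

lemma A_pos: "A m > 0" unfolding A_def by simp

lemma A_Suc: "A (Suc m) = A m * (4 * (2 * real m + 1)^2 / (real m + 1))"
proof -
  have f1: "fact (2 * Suc m) = (2 * real m + 2) * (2 * real m + 1) * (fact (2*m) :: real)"
    by (simp add: algebra_simps)
  have f2: "fact (Suc m) = (real m + 1) * (fact m :: real)" by simp
  have "fact (2 * Suc m) / fact (Suc m) = ((real m + 1) * (2 * (2 * real m + 1) * fact (2*m))) / ((real m + 1) * (fact m :: real))"
    unfolding f1 f2 by (simp add: algebra_simps)
  also have "\<dots> = 2 * (2 * real m + 1) * (fact (2*m) / (fact m :: real))"
    by (subst mult_divide_mult_cancel_left) simp_all
  finally have q: "fact (2 * Suc m) / fact (Suc m) = 2 * (2 * real m + 1) * (fact (2*m) / (fact m :: real))" .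
  define r where "r = fact (2*m) / (fact m :: real)"
  have fm: "(fact m :: real) > 0" by simp
  have "A (Suc m) = (fact (2 * Suc m) / fact (Suc m))^2 / fact (Suc m)"
    unfolding A_def ..
  also have "\<dots> = (2 * (2 * real m + 1) * r)^2 / ((real m + 1) * fact m)"
    by (subst q) (simp only: f2 r_def)
  also have "\<dots> = r^2 / fact m * (4 * (2 * real m + 1)^2 / (real m + 1))"
    using fm by (simp add: field_simps power2_eq_square)
  finally show ?thesis unfolding A_def r_def .
qed

lemma E_lemma:
  assumes "m \<ge> 4"
  shows "ln (2 * A m) \<le> 1 + (ln 2 - 3/1000) * (real (2*m) * ln (real (2*m)))"
  using assms
proof (induction m rule: dec_induct)
  case base
  have A4: "A 4 = 117600" unfolding A_def by (simp add: fact_numeral)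
  have e1: "ln ((235200::real) ^ 20) = 20 * ln 235200" using ln_realpow[of "235200::real" 20] by simp
  have e2: "ln ((2::real) ^ 357) = 357 * ln 2" using ln_realpow[of "2::real" 357] by simp
  have e3: "ln ((235200::real) ^ 20) \<le> ln (2 ^ 357)" by (subst ln_le_cancel_iff) simp_all
  have h1: "20 * ln (235200::real) \<le> 357 * ln 2" using e1 e2 e3 by linarith
  have h2: "ln (8::real) = 3 * ln 2"
    using ln_realpow[of 2 3] by simp
  have a: "ln (2::real) > 693/1000" by (rule ln2_lower)
  have "(0::real) \<le> 24 * (ln 2 - 693/1000)^2 + (48*693/1000 - 17922/1000) * (ln 2 - 693/1000)"
    using a by (intro add_nonneg_nonneg mult_nonneg_nonneg) auto
  then have Q: "0 \<le> 24 * (ln 2 * ln 2) - 17922/1000 * ln (2::real) + 89397/100000"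
    by (simp add: algebra_simps power2_eq_square)
  have e4: "real (2*4) * ln (real (2*4)) = 8 * (3 * ln (2::real))" using h2 by simp
  have "ln (2 * A 4) = ln 235200" unfolding A4 by simp
  also have "\<dots> \<le> 1 + (ln 2 - 3/1000) * (8 * (3 * ln 2))"
    using h1 Q by (simp add: algebra_simps)
  finally show ?case using e4 by simp
next
  case (step m)
  define a :: real where "a = ln 2"
  define X where "X = ln (2 * real m + 2)"
  define Y where "Y = ln (2 * real m + 1)"
  define Z where "Z = ln (2 * real m)"
  define u :: real where "u = 1 / (real m + 1)"
  have m4: "real m \<ge> 4" using step by simp
  have a: "a > 693/1000" unfolding a_def by (rule ln2_lower)
  have u: "u \<le> 1/5" "u > 0" unfolding u_def using m4 by (auto simp: field_simps)
  have hY: "Y \<le> X - u / 2"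
    using ln_ratio_le[of "2 * real m + 1" "2 * real m + 2"] m4 unfolding X_def Y_def u_def
    by (simp add: field_simps)
  have hZ: "Z \<le> X - u"
    using ln_ratio_le[of "2 * real m" "2 * real m + 2"] m4 unfolding X_def Z_def u_def
    by (simp add: field_simps)
  have ln10: "ln (10::real) \<ge> 3 * a + 1/5"
  proof -
    have "ln (8::real) \<le> ln 10 - (10 - 8) / 10" by (rule ln_ratio_le) simp_all
    moreover have "ln (8::real) = 3 * a" using ln_realpow[of 2 3] unfolding a_def by simp
    ultimately show ?thesis by simp
  qed
  have hX: "X \<ge> ln 10" unfolding X_def using m4 by simp
  have "ln (4 * (2 * real m + 1)^2 / (real m + 1)) = ln 4 + 2 * Y - ln (real m + 1)"
    unfolding Y_def using m4 by (simp add: ln_div ln_mult ln_realpow)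
  also have "ln (real m + 1) = X - a"
  proof -
    have eq: "2 * real m + 2 = 2 * (real m + 1)" by simp
    have "X = ln 2 + ln (real m + 1)" unfolding X_def by (subst eq, rule ln_mult_pos) simp_all
    thus ?thesis unfolding a_def by simp
  qed
  also have "ln (4::real) = 2 * a" using ln_realpow[of 2 2] unfolding a_def by simp
  finally have r: "ln (4 * (2 * real m + 1)^2 / (real m + 1)) = 3 * a + 2 * Y - X" by simp
  have LL: "real (2 * Suc m) * ln (real (2 * Suc m)) - real (2*m) * ln (real (2*m))
      \<ge> 2 * X + 2 - 2 * u"
  proof -
    have e1: "real (2 * Suc m) * ln (real (2 * Suc m)) = (2 * real m + 2) * X"
      unfolding X_def by (simp add: algebra_simps)
    have e2: "real (2*m) * ln (real (2*m)) = 2 * real m * Z" unfolding Z_def by simp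
    have "2 * real m * Z \<le> 2 * real m * (X - u)" using hZ m4 by simp
    moreover have "2 * real m * u = 2 - 2 * u" unfolding u_def using m4 by (simp add: field_simps)
    ultimately show ?thesis unfolding e1 e2 by (simp add: algebra_simps)
  qed
  have key1: "(2 * (a - 3/1000) - 1) * (X - u) \<ge> (2 * (a - 3/1000) - 1) * (3 * a)"
    using a hX ln10 u by (intro mult_left_mono) auto
  have key2: "(2 * (a - 3/1000) - 1) * (3 * a) \<ge> a + 6/1000"
  proof -
    have "a * (6 * a - 4018/1000) \<ge> (693/1000) * (6 * a - 4018/1000)"
      using a by (intro mult_right_mono) auto
    moreover have "(693/1000) * (6 * a - 4018/1000) \<ge> 693/1000 * (140/1000)"
      using a by (intro mult_left_mono) auto
    ultimately show ?thesis by (simp add: algebra_simps)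
  qed
  have step_ineq: "3 * a + 2 * Y - X \<le> (a - 3/1000) *
      (real (2 * Suc m) * ln (real (2 * Suc m)) - real (2*m) * ln (real (2*m)))"
  proof -
    have "(a - 3/1000) * (2 * X + 2 - 2 * u) \<le> (a - 3/1000) *
      (real (2 * Suc m) * ln (real (2 * Suc m)) - real (2*m) * ln (real (2*m)))"
      using LL a by (intro mult_left_mono) auto
    moreover have "3 * a + 2 * Y - X \<le> (a - 3/1000) * (2 * X + 2 - 2 * u)"
      proof -
      have "(a - 3/1000) * (2 * X + 2 - 2 * u) - (3 * a + X - u)
          = (2 * (a - 3/1000) - 1) * (X - u) - (a + 6/1000)" by (simp add: field_simps)
      thus ?thesis using key1 key2 hY by linarith
    qed
    ultimately show ?thesis by linarith
  qed
  have pos: "4 * (2 * real m + 1)^2 / (real m + 1) > 0" by simp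
  have "ln (2 * A (Suc m)) = ln (2 * A m) + ln (4 * (2 * real m + 1)^2 / (real m + 1))"
  proof -
    have "2 * A (Suc m) = (2 * A m) * (4 * (2 * real m + 1)^2 / (real m + 1))"
      unfolding A_Suc by simp
    thus ?thesis using A_pos[of m] pos by (simp only: ln_mult_pos)
  qed
  also have "\<dots> \<le> 1 + (a - 3/1000) * (real (2*m) * ln (real (2*m))) + (3 * a + 2 * Y - X)"
    using step.IH r unfolding a_def by simp
  also have "\<dots> \<le> 1 + (a - 3/1000) * (real (2 * Suc m) * ln (real (2 * Suc m)))"
    using step_ineq by (simp add: algebra_simps)
  finally show ?case unfolding a_def .
qed

lemma B_nonneg: "B_term n j \<ge> 0"
  unfolding B_term_def by simp

lemma B_expr:
  assumes "0 < k" "k \<le> n"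
  shows "B_term n (n - k) = (fact n / fact k)^2 / fact (n - k) *
           exp (real n * ln (real n) * ln (real k / real n))"
proof -
  have nk: "n - (n - k) = k" using assms by simp
  have r: "1 - real (n - k) / real n = real k / real n"
    using assms by (simp add: of_nat_diff field_simps)
  have "real k / real n \<noteq> 0" using assms by simp
  then show ?thesis unfolding B_term_def nk r powr_def by simp
qed

lemma ratio:
  assumes k1: "1 \<le> k" and kn: "2 * (k + 1) \<le> n"
  shows "B_term n (n - k) \<le> B_term n (n - Suc k) / 2"
proof -
  define L where "L = real n * ln (real n)"
  define G where "G = (fact n / fact (Suc k))^2 / (fact (n - Suc k) :: real)"
  define E where "E = exp (L * ln (real (Suc k) / real n))"
  have n2: "n \<ge> 4" using assms by simp
  have b1: "B_term n (n - Suc k) = G * E"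
    unfolding G_def E_def L_def using assms by (subst B_expr) simp_all
  have fk: "(fact n / fact k :: real) = real (Suc k) * (fact n / fact (Suc k))"
  proof -
    have "(fact (Suc k) :: real) = real (Suc k) * fact k" by simp
    moreover have "real (Suc k) * (fact n / (real (Suc k) * fact k)) = (fact n / fact k :: real)"
      by (simp del: of_nat_Suc)
    ultimately show ?thesis by simp
  qed
  have nsk: "n - k = Suc (n - Suc k)" using assms by simp
  have fnk: "(fact (n - k) :: real) = real (n - k) * fact (n - Suc k)"
    unfolding nsk by simp
  have Gk: "(fact n / fact k)^2 / (fact (n - k) :: real) = G * (real (Suc k)^2 / real (n - k))"
    unfolding fk fnk G_def using assms by (simp add: field_simps power2_eq_square)
  have lnk: "ln (real k / real n) = ln (real (Suc k) / real n) + ln (real k / real (Suc k))"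
    using assms by (simp add: ln_div)
  define F where "F = exp (L * ln (real k / real (Suc k)))"
  have Ek: "exp (L * ln (real k / real n)) = E * F"
    unfolding E_def F_def lnk by (simp add: algebra_simps exp_add)
  have b0: "B_term n (n - k) = (G * E) * (real (Suc k)^2 / real (n - k) * F)"
    using assms by (subst B_expr) (simp_all add: L_def[symmetric] Gk Ek)
  have L0: "L \<ge> 0" unfolding L_def using n2 by simp
  have lnle: "ln (real k / real (Suc k)) \<le> - 1 / real (Suc k)"
  proof -
    have "ln (real k / real (Suc k)) \<le> real k / real (Suc k) - 1"
      using k1 by (intro ln_le_minus_one) simp
    also have "\<dots> = - 1 / real (Suc k)" by (simp add: field_simps)
    finally show ?thesis .
  qed
  have "L * ln (real k / real (Suc k)) \<le> L * (- 1 / real (Suc k))"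
    using lnle L0 by (rule mult_left_mono)
  also have "\<dots> \<le> - 2 * ln (real n)"
  proof -
    have "2 * real (Suc k) * ln (real n) \<le> real n * ln (real n)"
      using kn n2 by (intro mult_right_mono) simp_all
    thus ?thesis unfolding L_def by (simp add: field_simps)
  qed
  finally have "F \<le> exp (- 2 * ln (real n))" unfolding F_def by simp
  also have "exp (- 2 * ln (real n)) = 1 / real n ^ 2"
  proof -
    have "exp (2 * ln (real n)) = real n ^ 2"
      unfolding mult_2 exp_add using n2 by (simp add: power2_eq_square)
    thus ?thesis by (simp add: exp_minus field_simps)
  qed
  finally have Fle: "F \<le> 1 / real n ^ 2" .
  have F0: "F \<ge> 0" unfolding F_def by simp
  have "real (Suc k)^2 / real (n - k) * F \<le> real (Suc k)^2 / 1 * (1 / real n ^ 2)"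
  proof (intro mult_mono divide_left_mono)
    show "1 \<le> real (n - k)" using assms by simp
  qed (use Fle F0 assms in simp_all)
  also have "\<dots> \<le> 1/2"
  proof -
    have "real (Suc k) * 2 \<le> real n" using kn by simp
    hence "(real (Suc k) * 2)^2 \<le> real n ^ 2" by (intro power_mono) simp_all
    moreover have "4 * real (Suc k)^2 = (real (Suc k) * 2)^2" by (simp add: power2_eq_square algebra_simps)
    ultimately have "4 * real (Suc k)^2 \<le> real n ^ 2" by linarith
    moreover have Np: "real n ^ 2 > 0" using n2 by simp
    ultimately have q: "real (Suc k)^2 / real n ^ 2 \<le> 1/4" by (simp add: pos_divide_le_eq)
    have e: "real (Suc k)^2 / 1 * (1 / real n ^ 2) = real (Suc k)^2 / real n ^ 2" by simp
    show ?thesis using e q by linarith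
  qed
  finally have fac: "real (Suc k)^2 / real (n - k) * F \<le> 1/2" .
  have GE: "G * E \<ge> 0" unfolding G_def E_def by simp
  have "B_term n (n - k) \<le> (G * E) * (1/2)"
    unfolding b0 using fac GE by (rule mult_left_mono)
  thus ?thesis unfolding b1 by simp
qed

lemma sum_geom:
  fixes f :: "nat \<Rightarrow> real"
  assumes dec: "\<And>j. lo \<le> j \<Longrightarrow> j < hi \<Longrightarrow> f (Suc j) \<le> f j / 2"
    and nn: "\<And>j. f j \<ge> 0" and lh: "lo \<le> hi"
  shows "sum f {lo..hi} \<le> 2 * f lo"
proof -
  have "\<forall>i. hi - i = d \<longrightarrow> lo \<le> i \<longrightarrow> i \<le> hi \<longrightarrow> sum f {i..hi} \<le> 2 * f i" for d
  proof (induction d)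
    case 0
    then show ?case using nn by auto
  next
    case (Suc d)
    show ?case
    proof (intro allI impI)
      fix i assume h: "hi - i = Suc d" "lo \<le> i" "i \<le> hi"
      have "sum f {i..hi} = f i + sum f {Suc i..hi}" using h by (subst sum.atLeast_Suc_atMost) auto
      also have "sum f {Suc i..hi} \<le> 2 * f (Suc i)" using Suc.IH h by auto
      also have "f (Suc i) \<le> f i / 2" using dec h by auto
      finally show "sum f {i..hi} \<le> 2 * f i" by simp
    qed
  qed
  thus ?thesis using lh by auto
qed

lemma even_case:
  assumes m: "m \<ge> 5"
  shows "2 * B_term (2*m) m \<le> exp (1 - 3 / 1000 * real (2*m) * ln (real (2*m)))"
proof -
  define L where "L = real (2*m) * ln (real (2*m))"
  define a :: real where "a = ln 2"
  have mm: "2 * m - m = m" by simp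
  have h: "1 - real m / real (2*m) = 1/2" using m by (simp add: field_simps)
  have B: "B_term (2*m) m = A m * exp (- a * L)"
    unfolding B_term_def A_def mm h powr_def L_def[symmetric] a_def
    by (simp add: ln_div mult.commute)
  have E: "ln (2 * A m) \<le> 1 + (a - 3/1000) * L"
    using E_lemma[of m] m unfolding a_def L_def by simp
  have "2 * B_term (2*m) m = exp (ln (2 * A m)) * exp (- a * L)"
    unfolding B using A_pos[of m] by simp
  also have "\<dots> \<le> exp (1 + (a - 3/1000) * L) * exp (- a * L)"
    using E by simp
  also have "\<dots> = exp (1 - 3 / 1000 * L)"
    by (simp add: exp_add[symmetric] algebra_simps)
  finally show ?thesis unfolding L_def by (simp add: mult.assoc)
qed

lemma odd_case:
  assumes m: "m \<ge> 4"
  shows "2 * B_term (2*m+1) (m+1) \<le> exp (1 - 3 / 1000 * real (2*m+1) * ln (real (2*m+1)))"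
proof -
  define n where "n = 2*m+1"
  define L where "L = real n * ln (real n)"
  define L0 where "L0 = real (2*m) * ln (real (2*m))"
  define a :: real where "a = ln 2"
  define c where "c = a - 3/1000"
  have a: "a > 693/1000" unfolding a_def by (rule ln2_lower)
  have n9: "real n \<ge> 9" unfolding n_def using m by simp
  have nm: "n - (m+1) = m" unfolding n_def by simp
  have h: "1 - real (m+1) / real n = real m / real n" unfolding n_def by (simp add: field_simps)
  have fn: "(fact n / fact m :: real) = real n * (fact (2*m) / fact m)"
    unfolding n_def by simp
  have fm1: "(fact (m+1) :: real) = (real m + 1) * fact m" by simp
  have B: "B_term n (m+1) = real n ^ 2 / (real m + 1) * A m * exp (L * ln (real m / real n))"
  proof -
    have "real m / real n \<noteq> 0" using m unfolding n_def by simp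
    hence "B_term n (m+1) = (real n * (fact (2*m) / fact m))^2 * (1 / ((real m + 1) * fact m))
        * exp (L * ln (real m / real n))"
      unfolding B_term_def nm h fn fm1 powr_def L_def by (simp add: mult.commute)
    thus ?thesis unfolding A_def by (simp add: field_simps power2_eq_square)
  qed
  have E: "ln (2 * A m) \<le> 1 + c * L0"
    using E_lemma[of m] m unfolding c_def a_def L0_def by simp
  have lnmn: "ln (real m / real n) \<le> - 1 / real n - a"
  proof -
    have "ln (real m / real n) = ln (real (2*m) / real n) - a"
      unfolding a_def using m n9 by (simp add: ln_div ln_mult_pos)
    moreover have "ln (real (2*m) / real n) \<le> real (2*m) / real n - 1"
      using m n9 by (intro ln_le_minus_one) simp
    moreover have "real (2*m) / real n - 1 = - 1 / real n"
      unfolding n_def by (simp add: field_simps)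
    ultimately show ?thesis by linarith
  qed
  have L0': "L \<ge> 0" unfolding L_def using n9 by simp
  have "L * ln (real m / real n) \<le> L * (- 1 / real n - a)"
    using lnmn L0' by (rule mult_left_mono)
  also have "\<dots> = - ln (real n) - a * L"
    unfolding L_def using n9 by (simp add: field_simps)
  finally have LE: "L * ln (real m / real n) \<le> - ln (real n) - a * L" .
  define W where "W = 1 + c * L0 - a * L"
  have p1: "2 * B_term n (m+1) = real n ^ 2 / (real m + 1) * (exp (ln (2 * A m)) * exp (L * ln (real m / real n)))"
    unfolding B using A_pos[of m] by simp
  have p2: "exp (ln (2 * A m)) * exp (L * ln (real m / real n)) \<le> exp W / real n"
  proof -
    have "exp (ln (2 * A m)) * exp (L * ln (real m / real n)) = exp (ln (2 * A m) + L * ln (real m / real n))"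
      by (simp add: exp_add)
    also have "\<dots> \<le> exp (W - ln (real n))"
      using E LE unfolding W_def by simp
    also have "exp (W - ln (real n)) = exp W / real n"
      using n9 by (simp add: exp_diff)
    finally show ?thesis .
  qed
  have "2 * B_term n (m+1) \<le> real n ^ 2 / (real m + 1) * (exp W / real n)"
    unfolding p1 by (rule mult_left_mono[OF p2]) simp
  also have "\<dots> = real n / (real m + 1) * exp W"
    using n9 by (simp add: power2_eq_square)
  also have "\<dots> \<le> 2 * exp W"
  proof (rule mult_right_mono)
    show "real n / (real m + 1) \<le> 2" unfolding n_def by (simp add: field_simps)
  qed simp
  also have "2 * exp W = exp (a + W)" unfolding a_def by (simp add: exp_add)
  also have "\<dots> \<le> exp (1 - 3/1000 * L)"
  proof -
    have "L - L0 \<ge> ln (real n)"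
    proof -
      have "ln (real (2*m)) \<le> ln (real n)" unfolding n_def using m by simp
      hence "L0 \<le> real (2*m) * ln (real n)" unfolding L0_def using m by (intro mult_left_mono) simp_all
      thus ?thesis unfolding L_def n_def by (simp add: algebra_simps)
    qed
    moreover have "ln (real n) \<ge> 3 * a"
    proof -
      have "ln (8::real) = 3 * a" using ln_realpow[of 2 3] unfolding a_def by simp
      moreover have "ln 8 \<le> ln (real n)" using n9 by simp
      ultimately show ?thesis by simp
    qed
    ultimately have d: "L - L0 \<ge> 3 * a" by linarith
    have "c * (L - L0) \<ge> c * (3 * a)" using d a unfolding c_def by (intro mult_left_mono) simp_all
    moreover have "c * (3 * a) \<ge> a" using a unfolding c_def
    proof -
      have "a * (3 * (a - 3/1000) - 1) \<ge> 0" using a by (intro mult_nonneg_nonneg) simp_all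
      thus "(a - 3/1000) * (3 * a) \<ge> a" by (simp add: algebra_simps)
    qed
    ultimately have "a + c * L0 \<le> c * L" by (simp add: algebra_simps)
    thus ?thesis unfolding W_def c_def by (simp add: algebra_simps)
  qed
  finally have fin: "2 * B_term n (m+1) \<le> exp (1 - 3/1000 * L)" .
  have eqL: "3/1000 * L = 3/1000 * real (2*m+1) * ln (real (2*m+1))"
    unfolding L_def n_def by (simp only: mult.assoc)
  show ?thesis using fin unfolding eqL n_def .
qed

theorem proposition4p4:
  fixes n :: nat
  assumes "n \<ge> 9"
  shows "phi2 n \<le> exp (1 - 3 / 1000 * real n * ln (real n))"
proof -
  define lo where "lo = n - n div 2"
  have lo_eq: "nat \<lceil>real n / 2\<rceil> = lo"
  proof (cases "even n")
    case True
    then obtain m where n: "n = 2*m" by (auto elim: evenE)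
    then show ?thesis unfolding lo_def by simp
  next
    case False
    then obtain m where n: "n = 2*m+1" using oddE by blast
    have "\<lceil>real n / 2\<rceil> = int m + 1" by (rule ceiling_unique) (simp_all add: n)
    then show ?thesis unfolding lo_def using n by simp
  qed
  have sum_le: "phi2 n \<le> 2 * B_term n lo"
    unfolding phi2_def lo_eq
  proof (rule sum_geom)
    fix j assume j: "lo \<le> j" "j < n"
    show "B_term n (Suc j) \<le> B_term n j / 2"
    proof (cases "Suc j = n")
      case True
      have "B_term n n = 0" unfolding B_term_def using assms by simp
      then show ?thesis using True B_nonneg[of n j] by simp
    next
      case False
      define k where "k = n - Suc j"
      have k1: "1 \<le> k" using j False unfolding k_def by simp
      have kn: "2 * (k + 1) \<le> n" using j unfolding k_def lo_def by simp
      have e1: "n - k = Suc j" using j unfolding k_def by simp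
      have e2: "n - Suc k = j" using j False unfolding k_def by simp
      show ?thesis using ratio[OF k1 kn] unfolding e1 e2 .
    qed
  next
    show "\<And>j. 0 \<le> B_term n j" by (rule B_nonneg)
  next
    show "lo \<le> n" by (simp add: lo_def)
  qed
  also have "2 * B_term n lo \<le> exp (1 - 3 / 1000 * real n * ln (real n))"
  proof (cases "even n")
    case True
    then obtain m where n: "n = 2*m" by (auto elim: evenE)
    have "m \<ge> 5" using assms n by simp
    moreover have "lo = m" unfolding lo_def n by simp
    ultimately show ?thesis unfolding n using even_case by simp
  next
    case False
    then obtain m where n: "n = 2*m+1" using oddE by blast
    have "m \<ge> 4" using assms n by simp
    moreover have "lo = m + 1" unfolding lo_def n by simp
    ultimately show ?thesis unfolding n using odd_case by simp
  qed
  finally show ?thesis .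
qed

end
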